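(* Let $H_1,H_2$ be Hermitian matrices and $f_1,f_2:[0,T]\to\mathbb{R}$ continuously differentiable, and let $U(t,s)$ be the propagator of $H(t)=f_1(t)H_1+f_2(t)H_2$. For $0<h\le T$ let $U_{s,1}(h,0)=\exp(-\mathrm{i} f_2(h)H_2h)\exp(-\mathrm{i} f_1(h)H_1h)$. Then $$U_{s,1}(h,0)-U(h,0)=\int_0^h U(h,s)\exp(-\mathrm{i} s f_2(s)H_2)\,E_{s,1}(s)\,\exp(-\mathrm{i} s f_1(s)H_1)\,ds,$$ where $$E_{s,1}(h)=\int_0^h f_1(h)f_2(s)\Big(\exp\big(\operatorname{ad}_{\mathrm{i} s f_2(s)H_2}\big)([H_1,H_2])\Big)ds-\mathrm{i} h f_1'(h)H_1-\mathrm{i} h f_2'(h)H_2+\int_0^h s f_1(h)f_2'(s)\Big(\exp\big(\operatorname{ad}_{\mathrm{i} s f_2(s)H_2}\big)([H_1,H_2])\Big)ds.$$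
   Context: $U(t,s)$ denotes the exact evolution operator: $\partial_t U(t,s)=-\mathrm{i} H(t)U(t,s)$, $U(s,s)=I$. For matrices $A,B$, $\operatorname{ad}_A(B)=[A,B]=AB-BA$ and $\exp(\operatorname{ad}_A)B=\exp(A)B\exp(-A)$. *)

theory Defs
  imports "HOL-Analysis.Analysis"
begin

text \<open>Note that the library's exp on this type would be componentwise, so the matrix exponential
  is defined explicitly by its power series.\<close>

type_synonym 'n cmat = "complex ^ 'n ^ 'n"

primrec mpow :: "'n::finite cmat \<Rightarrow> nat \<Rightarrow> 'n cmat" where
  "mpow A 0 = mat 1"
| "mpow A (Suc k) = A ** mpow A k"

definition mexp :: "'n::finite cmat \<Rightarrow> 'n cmat" where
  "mexp A = (\<Sum>k. (1 / fact k) *\<^sub>R mpow A k)"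

definition csmult :: "complex \<Rightarrow> 'n::finite cmat \<Rightarrow> 'n cmat" (infixr "*\<^sub>c" 75) where
  "c *\<^sub>c A = (\<chi> i j. c * A $ i $ j)"

definition hermitian :: "'n::finite cmat \<Rightarrow> bool" where
  "hermitian A \<longleftrightarrow> (\<forall>i j. A $ i $ j = cnj (A $ j $ i))"

definition commut :: "'n::finite cmat \<Rightarrow> 'n cmat \<Rightarrow> 'n cmat" where
  "commut A B = A ** B - B ** A"

definition exp_ad :: "'n::finite cmat \<Rightarrow> 'n cmat \<Rightarrow> 'n cmat" where
  "exp_ad A B = mexp A ** B ** mexp (- A)"

end

theory Submission
  imports Defs
begin


lemma mm_scaleR_left: fixes A B :: "'n::finite cmat" shows "(r *\<^sub>R A) ** B = r *\<^sub>R (A ** B)"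
  by (simp add: vec_eq_iff matrix_matrix_mult_def vector_scaleR_component scaleR_sum_right)

lemma mm_scaleR_right: fixes A B :: "'n::finite cmat" shows "A ** (r *\<^sub>R B) = r *\<^sub>R (A ** B)"
  by (simp add: vec_eq_iff matrix_matrix_mult_def vector_scaleR_component scaleR_sum_right)

lemma mm_add_left: fixes A B C :: "'n::finite cmat" shows "(A + B) ** C = A ** C + B ** C"
  by (simp add: vec_eq_iff matrix_matrix_mult_def sum.distrib distrib_right)

lemma bilinear_mm: "bilinear ((**) :: 'n::finite cmat \<Rightarrow> 'n cmat \<Rightarrow> 'n cmat)"
  unfolding bilinear_def
  by (auto intro!: linearI simp: mm_scaleR_left mm_scaleR_right mm_add_left matrix_add_ldistrib)

lemma bb_mm: "bounded_bilinear ((**) :: 'n::finite cmat \<Rightarrow> 'n cmat \<Rightarrow> 'n cmat)"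
  using bilinear_mm bilinear_conv_bounded_bilinear by blast



lemma mpow_scaleR: fixes N :: "'n::finite cmat" shows "mpow (t *\<^sub>R N) n = t^n *\<^sub>R mpow N n"
  by (induction n) (simp_all add: mm_scaleR_left mm_scaleR_right)

lemma mpow_comm: fixes N :: "'n::finite cmat" shows "N ** mpow N n = mpow N n ** N"
proof (induction n)
  case (Suc n)
  have "N ** mpow N (Suc n) = N ** (mpow N n ** N)" using Suc by simp
  also have "\<dots> = mpow N (Suc n) ** N" by (simp add: matrix_mul_assoc)
  finally show ?case .
qed simp

lemma mexp_scaleR_series: fixes N :: "'n::finite cmat"
  shows "mexp (t *\<^sub>R N) = (\<Sum>k. (t^k / fact k) *\<^sub>R mpow N k)"
  by (simp add: mexp_def mpow_scaleR)

lemma mm_bound: obtains K where "K > 0" "\<And>(A::'n::finite cmat) (B::'n cmat). norm (A ** B) \<le> norm A * norm B * K"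
proof -
  from bounded_bilinear.pos_bounded[OF bb_mm[where 'n='n]]
  obtain K where "0 < K" "\<forall>(A::'n cmat) (B::'n cmat). norm (A ** B) \<le> norm A * norm B * K" by auto
  then show ?thesis using that by auto
qed

lemma norm_mpow: fixes N :: "'n::finite cmat"
  assumes "K > 0" "\<And>(A::'n::finite cmat) (B::'n cmat). norm (A ** B) \<le> norm A * norm B * K"
  shows "norm (mpow N n) \<le> norm (mat 1 :: 'n cmat) * (K * norm N)^n"
proof (induction n)
  case 0 then show ?case by simp
next
  case (Suc n)
  have "norm (mpow N (Suc n)) \<le> norm N * norm (mpow N n) * K" using assms(2)[of N "mpow N n"] by simp
  also have "\<dots> \<le> norm N * (norm (mat 1 :: 'n cmat) * (K * norm N)^n) * K"
    using Suc assms(1) by (intro mult_right_mono mult_left_mono) auto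
  also have "\<dots> = norm (mat 1 :: 'n cmat) * (K * norm N)^Suc n" by (simp add: algebra_simps)
  finally show ?case .
qed

lemma summable_mexp_series: fixes N :: "'n::finite cmat"
  shows "summable (\<lambda>k. (t^k / fact k) *\<^sub>R mpow N k)"
proof -
  obtain K where K: "K > 0" "\<And>(A::'n::finite cmat) (B::'n cmat). norm (A ** B) \<le> norm A * norm B * K"
    using mm_bound by blast
  define C where "C = norm (mat 1 :: 'n cmat)"
  define L where "L = K * norm N"
  have "summable (\<lambda>k. C * (inverse (fact k) * (\<bar>t\<bar> * L)^k))"
    by (intro summable_mult summable_exp)
  moreover have "norm ((t^k / fact k) *\<^sub>R mpow N k) \<le> C * (inverse (fact k) * (\<bar>t\<bar> * L)^k)" for k
  proof -
    have "norm ((t^k / fact k) *\<^sub>R mpow N k) = (\<bar>t\<bar>^k / fact k) * norm (mpow N k)"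
      by (simp add: power_abs)
    also have "\<dots> \<le> (\<bar>t\<bar>^k / fact k) * (C * L^k)"
      unfolding C_def L_def by (intro mult_left_mono norm_mpow K) auto
    also have "\<dots> = C * (inverse (fact k) * (\<bar>t\<bar> * L)^k)"
      by (simp add: field_simps power_mult_distrib)
    finally show ?thesis .
  qed
  ultimately show ?thesis
    by (rule summable_comparison_test'[where N=0])
qed



lemma mexp_vd_at: fixes N :: "'n::finite cmat"
  shows "((\<lambda>t. mexp (t *\<^sub>R N)) has_vector_derivative (N ** mexp (x *\<^sub>R N))) (at x)"
proof -
  obtain K where K: "K > 0" "\<And>(A::'n::finite cmat) (B::'n cmat). norm (A ** B) \<le> norm A * norm B * K"
    using mm_bound by blast
  define C where "C = norm (mat 1 :: 'n cmat)"
  define L where "L = K * norm N"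
  have L0: "L \<ge> 0" "C \<ge> 0" using K by (auto simp: L_def C_def)
  define P where "P = mpow N"
  define R where "R = \<bar>x\<bar> + 1"
  define S where "S = ball x 1"
  define f where "f n y = (y^n / fact n) *\<^sub>R P n" for n y
  define D where "D n y = (real n * y^(n - 1) / fact n) *\<^sub>R P n" for n y
  have normP: "norm (P n) \<le> C * L^n" for n
    unfolding P_def C_def L_def using norm_mpow[OF K] .
  have yR: "\<bar>y\<bar> \<le> R" if "y \<in> S" for y
    using that by (auto simp: S_def R_def dist_real_def)
  have fd: "(f n has_derivative (\<lambda>h. h *\<^sub>R D n y)) (at y within S)" for n y
  proof -
    have "((\<lambda>y. y^n / fact n) has_real_derivative (real n * y^(n - 1) / fact n)) (at y within S)"
      by (auto intro!: derivative_eq_intros)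
    from has_vector_derivative_scaleR[OF this has_vector_derivative_const[of "P n"]]
    show ?thesis unfolding f_def D_def has_vector_derivative_def by simp
  qed
  define M where "M i = real i * R^(i - 1) / fact i * (C * L^i)" for i
  have Mb: "norm (D i y) \<le> M i" if "y \<in> S" for i y
  proof -
    have "norm (D i y) = (real i * \<bar>y\<bar>^(i - 1) / fact i) * norm (P i)"
      by (simp add: D_def power_abs abs_mult)
    also have "\<dots> \<le> (real i * R^(i - 1) / fact i) * (C * L^i)"
      using yR[OF that] L0
      by (intro mult_mono divide_right_mono mult_left_mono power_mono normP) auto
    finally show ?thesis unfolding M_def .
  qed
  have "summable (\<lambda>i. (C * L) * (inverse (fact i) * (R * L)^i))"
    by (intro summable_mult summable_exp)
  moreover have "M (Suc i) = (C * L) * (inverse (fact i) * (R * L)^i)" for i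
  proof -
    have fi: "real (Suc i) / fact (Suc i) = inverse (fact i)"
      by (simp add: fact_Suc[of i] field_simps del: of_nat_Suc)
    have "M (Suc i) = (real (Suc i) / fact (Suc i)) * R^i * (C * L^Suc i)" by (simp add: M_def)
    also have "\<dots> = (C * L) * (inverse (fact i) * (R * L)^i)"
      unfolding fi by (simp add: power_mult_distrib)
    finally show ?thesis .
  qed
  ultimately have sM: "summable M"
    by (subst summable_Suc_iff[symmetric]) simp
  have unif: "uniform_limit S (\<lambda>n y. \<Sum>i<n. D i y) (\<lambda>y. \<Sum>i. D i y) sequentially"
    by (rule Weierstrass_m_test[OF Mb sM])
  have xS: "x \<in> S" by (simp add: S_def)
  have sx: "(\<lambda>n. f n x) sums mexp (x *\<^sub>R N)"
    unfolding f_def P_def mexp_scaleR_series using summable_mexp_series by (rule summable_sums)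
  have "\<exists>g. \<forall>y\<in>S. (\<lambda>n. f n y) sums g y \<and> (g has_derivative (\<lambda>h. h *\<^sub>R (\<Sum>i. D i y))) (at y within S)"
  proof (rule has_derivative_series[OF _ fd _ xS sx])
    show "convex S" by (simp add: S_def)
    fix e :: real assume "e > 0"
    with unif have "\<forall>\<^sub>F n in sequentially. \<forall>y\<in>S. dist (\<Sum>i<n. D i y) (\<Sum>i. D i y) < e"
      by (simp add: uniform_limit_iff)
    then show "\<forall>\<^sub>F n in sequentially. \<forall>y\<in>S. \<forall>h. norm ((\<Sum>i<n. h *\<^sub>R D i y) - h *\<^sub>R (\<Sum>i. D i y)) \<le> e * norm h"
    proof eventually_elim
      case (elim n)
      show ?case
      proof (intro ballI allI)
        fix y h assume "y \<in> S"
        have "norm ((\<Sum>i<n. h *\<^sub>R D i y) - h *\<^sub>R (\<Sum>i. D i y)) = \<bar>h\<bar> * dist (\<Sum>i<n. D i y) (\<Sum>i. D i y)"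
          by (simp add: dist_norm scaleR_sum_right[symmetric] scaleR_diff_right[symmetric])
        also have "\<dots> \<le> e * norm h"
        proof -
          have d: "dist (\<Sum>i<n. D i y) (\<Sum>i. D i y) \<le> e" using elim \<open>y \<in> S\<close> by auto
          show ?thesis using mult_left_mono[OF d abs_ge_zero[of h]] by (simp add: mult.commute)
        qed
        finally show "norm ((\<Sum>i<n. h *\<^sub>R D i y) - h *\<^sub>R (\<Sum>i. D i y)) \<le> e * norm h" .
      qed
    qed
  qed
  then obtain g where g: "\<And>y. y \<in> S \<Longrightarrow> (\<lambda>n. f n y) sums g y"
    "\<And>y. y \<in> S \<Longrightarrow> (g has_derivative (\<lambda>h. h *\<^sub>R (\<Sum>i. D i y))) (at y within S)" by blast
  have geq: "g y = mexp (y *\<^sub>R N)" if "y \<in> S" for y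
    using g(1)[OF that] unfolding f_def P_def mexp_scaleR_series by (simp add: sums_iff)
  have gd: "(g has_derivative (\<lambda>h. h *\<^sub>R (\<Sum>i. D i x))) (at x)"
    using g(2)[OF xS] at_within_open[OF xS] by (simp add: S_def)
  have d2: "((\<lambda>t. mexp (t *\<^sub>R N)) has_derivative (\<lambda>h. h *\<^sub>R (\<Sum>i. D i x))) (at x)"
    by (rule has_derivative_transform_within_open[OF gd _ xS]) (auto simp: S_def geq)
  have sD: "summable (\<lambda>i. D i x)"
    by (rule summable_comparison_test'[OF sM, where N=0]) (use Mb[OF xS] in auto)
  have "(\<Sum>i. D i x) = (\<Sum>i. D (Suc i) x)"
    using suminf_split_head[OF sD] by (simp add: D_def)
  also have "\<dots> = (\<Sum>i. N ** f i x)"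
  proof -
    have "real (Suc i) * x ^ i / fact (Suc i) = x^i / fact i" for i
      by (simp add: fact_Suc[of i] field_simps del: of_nat_Suc)
    then show ?thesis by (simp add: D_def f_def P_def mm_scaleR_right del: of_nat_Suc)
  qed
  also have "\<dots> = N ** (\<Sum>i. f i x)"
    by (rule bounded_linear.suminf[OF bounded_bilinear.bounded_linear_right[OF bb_mm], symmetric])
       (use sx in \<open>simp add: sums_iff\<close>)
  also have "\<dots> = N ** mexp (x *\<^sub>R N)" using sx by (simp add: sums_iff)
  finally show ?thesis using d2 by (simp add: has_vector_derivative_def)
qed



lemma mexp_zero: "mexp (0 :: 'n::finite cmat) = mat 1"
proof -
  have "(\<lambda>k. (1 / fact k) *\<^sub>R mpow (0 :: 'n cmat) k) = (\<lambda>k. if k = 0 then mat 1 else 0)"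
    by (rule ext) (case_tac k, auto)
  moreover have "(\<lambda>k. if k = 0 then mat 1 else (0::'n cmat)) sums mat 1"
    using sums_single[of 0 "\<lambda>_. mat 1 :: 'n cmat"] by simp
  ultimately show ?thesis unfolding mexp_def by (simp add: sums_iff)
qed

lemma mexp_zero': "mexp (0 *\<^sub>R (N::'n::finite cmat)) = mat 1"
  by (simp add: mexp_zero)

lemma mexp_comm: fixes N :: "'n::finite cmat"
  shows "N ** mexp (x *\<^sub>R N) = mexp (x *\<^sub>R N) ** N"
proof -
  have s: "summable (\<lambda>k. (x^k / fact k) *\<^sub>R mpow N k)" by (rule summable_mexp_series)
  have "N ** mexp (x *\<^sub>R N) = (\<Sum>k. N ** ((x^k / fact k) *\<^sub>R mpow N k))"
    unfolding mexp_scaleR_series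
    by (rule bounded_linear.suminf[OF bounded_bilinear.bounded_linear_right[OF bb_mm] s])
  also have "\<dots> = (\<Sum>k. ((x^k / fact k) *\<^sub>R mpow N k) ** N)"
    by (simp add: mm_scaleR_left mm_scaleR_right mpow_comm)
  also have "\<dots> = mexp (x *\<^sub>R N) ** N"
    unfolding mexp_scaleR_series
    by (rule bounded_linear.suminf[OF bounded_bilinear.bounded_linear_left[OF bb_mm] s, symmetric])
  finally show ?thesis .
qed

lemma const_zero_deriv:
  fixes F :: "real \<Rightarrow> 'a::real_normed_vector"
  assumes "convex S" "\<And>t. t \<in> S \<Longrightarrow> (F has_vector_derivative 0) (at t within S)"
    "x \<in> S" "y \<in> S"
  shows "F x = F y"
proof -
  have "\<exists>c. \<forall>x\<in>S. F x = c"
    by (rule has_derivative_zero_constant[OF assms(1)]) (use assms(2) in \<open>auto simp: has_vector_derivative_def\<close>)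
  then show ?thesis using assms(3,4) by auto
qed

lemma mexp_inv: fixes N :: "'n::finite cmat"
  shows "mexp (x *\<^sub>R N) ** mexp ((-x) *\<^sub>R N) = mat 1"
proof -
  define F where "F t = mexp (t *\<^sub>R N) ** mexp (t *\<^sub>R (-N))" for t
  have "(F has_vector_derivative 0) (at t within UNIV)" for t
  proof -
    have "(F has_vector_derivative (mexp (t *\<^sub>R N) ** ((-N) ** mexp (t *\<^sub>R (-N))) + (N ** mexp (t *\<^sub>R N)) ** mexp (t *\<^sub>R (-N)))) (at t)"
      unfolding F_def by (intro bounded_bilinear.has_vector_derivative[OF bb_mm] mexp_vd_at)
    moreover have "mexp (t *\<^sub>R N) ** ((-N) ** mexp (t *\<^sub>R (-N))) + (N ** mexp (t *\<^sub>R N)) ** mexp (t *\<^sub>R (-N)) = 0"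
      by (simp add: mexp_comm matrix_mul_assoc bounded_bilinear.minus_left[OF bb_mm] bounded_bilinear.minus_right[OF bb_mm])
    ultimately show ?thesis by simp
  qed
  then have "F x = F 0" by (intro const_zero_deriv[where S=UNIV]) auto
  then show ?thesis by (simp add: F_def mexp_zero)
qed

lemma mexp_inv': fixes N :: "'n::finite cmat"
  shows "mexp ((-x) *\<^sub>R N) ** mexp (x *\<^sub>R N) = mat 1"
  using mexp_inv[of "-x" N] by simp

lemma mexp_vd_chain:
  fixes N :: "'n::finite cmat"
  assumes "(a has_real_derivative a') (at t within X)"
  shows "((\<lambda>s. mexp (a s *\<^sub>R N)) has_vector_derivative (a' *\<^sub>R (N ** mexp (a t *\<^sub>R N)))) (at t within X)"
proof -
  have "(a has_vector_derivative a') (at t within X)"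
    using assms by (simp add: has_real_derivative_iff_has_vector_derivative)
  from vector_diff_chain_within[OF this has_vector_derivative_at_within[OF mexp_vd_at]]
  show ?thesis by (simp add: o_def)
qed



lemma sR_c: "r *\<^sub>R (z::complex) = complex_of_real r * z"
  by (simp add: scaleR_conv_of_real)

lemma cs_real: "complex_of_real r *\<^sub>c (A::'n::finite cmat) = r *\<^sub>R A"
  by (simp add: csmult_def vec_eq_iff sR_c)

lemma cs_mult_real: "(z * complex_of_real r) *\<^sub>c (A::'n::finite cmat) = r *\<^sub>R (z *\<^sub>c A)"
  by (simp add: csmult_def vec_eq_iff sR_c)

lemma cs_i: "(\<i> * complex_of_real r) *\<^sub>c (A::'n::finite cmat) = (-r) *\<^sub>R ((-\<i>) *\<^sub>c A)"
  by (simp add: csmult_def vec_eq_iff sR_c)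

lemma cs_add: "c *\<^sub>c (A + B) = c *\<^sub>c A + c *\<^sub>c (B::'n::finite cmat)"
  by (simp add: csmult_def vec_eq_iff algebra_simps)

lemma cs_diff: "c *\<^sub>c (A - B) = c *\<^sub>c A - c *\<^sub>c (B::'n::finite cmat)"
  by (simp add: csmult_def vec_eq_iff algebra_simps)

lemma cs_scaleR: "c *\<^sub>c (r *\<^sub>R A) = r *\<^sub>R (c *\<^sub>c (A::'n::finite cmat))"
  by (simp add: csmult_def vec_eq_iff sR_c algebra_simps)

lemma cs_cs: "c *\<^sub>c (d *\<^sub>c A) = (c * d) *\<^sub>c (A::'n::finite cmat)"
  by (simp add: csmult_def vec_eq_iff algebra_simps)

lemma cs_mm_left: "c *\<^sub>c (A ** B) = (c *\<^sub>c A) ** (B::'n::finite cmat)"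
  by (simp add: csmult_def vec_eq_iff matrix_matrix_mult_def sum_distrib_left algebra_simps)

lemma cs_mm_right: "A ** (c *\<^sub>c B) = c *\<^sub>c (A ** (B::'n::finite cmat))"
  by (simp add: csmult_def vec_eq_iff matrix_matrix_mult_def sum_distrib_left algebra_simps)

definition adj :: "'n::finite cmat \<Rightarrow> 'n cmat" where
  "adj A = (\<chi> i j. cnj (A $ j $ i))"

lemma adj_mm: "adj (A ** B) = adj B ** adj (A::'n::finite cmat)"
  by (simp add: adj_def vec_eq_iff matrix_matrix_mult_def mult.commute)

lemma adj_one: "adj (mat 1 :: 'n::finite cmat) = mat 1"
  by (simp add: adj_def vec_eq_iff mat_def)

lemma adj_add: "adj (A + B) = adj A + adj (B::'n::finite cmat)"
  by (simp add: adj_def vec_eq_iff)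

lemma adj_scaleR: "adj (r *\<^sub>R A) = r *\<^sub>R adj (A::'n::finite cmat)"
  by (simp add: adj_def vec_eq_iff sR_c)

lemma adj_cs: "adj (c *\<^sub>c A) = cnj c *\<^sub>c adj (A::'n::finite cmat)"
  by (simp add: adj_def vec_eq_iff csmult_def)

lemma adj_herm: "hermitian H \<Longrightarrow> adj H = H"
proof -
  assume "hermitian H"
  then have h: "\<And>i j. H$i$j = cnj(H$j$i)" unfolding hermitian_def by blast
  show ?thesis unfolding vec_eq_iff adj_def by (simp only: vec_lambda_beta) (metis h)
qed

lemma bl_adj: "bounded_linear (adj :: 'n::finite cmat \<Rightarrow> 'n cmat)"
proof -
  have "linear (adj :: 'n::finite cmat \<Rightarrow> 'n cmat)"
    by (intro linearI) (simp_all add: adj_add adj_scaleR)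
  then show ?thesis using linear_conv_bounded_linear by blast
qed


lemma key_alg:
  fixes E2 E2m E1 N1 N2 :: "'n::finite cmat"
  assumes "E2 ** E2m = mat 1" "N2 ** E2 = E2 ** N2"
  shows "E2 ** ((f1 + s*g1) *\<^sub>R (N1 ** E1)) + ((f2 + s*g2) *\<^sub>R (N2 ** E2)) ** E1
          - (f1 *\<^sub>R N1 + f2 *\<^sub>R N2) ** (E2 ** E1)
   = E2 ** (f1 *\<^sub>R (N1 - E2m ** N1 ** E2) + (s*g1) *\<^sub>R N1 + (s*g2) *\<^sub>R N2) ** E1"
proof -
  have a1: "E2 ** (E2m ** N1 ** E2) = N1 ** E2" using assms(1) by (simp add: matrix_mul_assoc)
  have r: "E2 ** (f1 *\<^sub>R (N1 - E2m ** N1 ** E2) + (s*g1) *\<^sub>R N1 + (s*g2) *\<^sub>R N2) ** E1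
      = f1 *\<^sub>R (E2 ** N1 ** E1) - f1 *\<^sub>R (N1 ** E2 ** E1) + (s*g1) *\<^sub>R (E2 ** N1 ** E1) + (s*g2) *\<^sub>R (E2 ** N2 ** E1)"
    by (simp add: matrix_add_ldistrib mm_add_left bounded_bilinear.diff_left[OF bb_mm]
      bounded_bilinear.diff_right[OF bb_mm] mm_scaleR_left mm_scaleR_right a1 scaleR_diff_right)
  have l: "E2 ** ((f1 + s*g1) *\<^sub>R (N1 ** E1)) + ((f2 + s*g2) *\<^sub>R (N2 ** E2)) ** E1
          - (f1 *\<^sub>R N1 + f2 *\<^sub>R N2) ** (E2 ** E1)
     = (f1 + s*g1) *\<^sub>R (E2 ** N1 ** E1) + (f2 + s*g2) *\<^sub>R (E2 ** N2 ** E1) - f1 *\<^sub>R (N1 ** E2 ** E1) - f2 *\<^sub>R (E2 ** N2 ** E1)"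
    by (simp add: mm_add_left mm_scaleR_left mm_scaleR_right matrix_mul_assoc assms(2))
  show ?thesis unfolding l r by (simp add: algebra_simps)
qed


lemma q_alg:
  fixes Em E N1 N2 C :: "'n::finite cmat"
  assumes "N2 ** Em = Em ** N2" "N1 ** N2 - N2 ** N1 = - C"
  shows "(Em ** N1) ** (a *\<^sub>R (N2 ** E)) + (Em ** 0 + ((-a) *\<^sub>R (N2 ** Em)) ** N1) ** E
         = (-a) *\<^sub>R (Em ** C ** E)"
proof -
  have "(Em ** N1) ** (a *\<^sub>R (N2 ** E)) + (Em ** 0 + ((-a) *\<^sub>R (N2 ** Em)) ** N1) ** E
      = a *\<^sub>R (Em ** (N1 ** N2 - N2 ** N1) ** E)"
    by (simp add: mm_scaleR_left mm_scaleR_right matrix_mul_assoc assms(1)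
        bounded_bilinear.minus_left[OF bb_mm] bounded_bilinear.diff_left[OF bb_mm] bounded_bilinear.diff_right[OF bb_mm] scaleR_diff_right)
  also have "\<dots> = (-a) *\<^sub>R (Em ** C ** E)"
    by (simp add: assms(2) bounded_bilinear.minus_left[OF bb_mm] bounded_bilinear.minus_right[OF bb_mm])
  finally show ?thesis .
qed

lemma N_comm:
  fixes H1 H2 :: "'n::finite cmat"
  shows "((-\<i>) *\<^sub>c H1) ** ((-\<i>) *\<^sub>c H2) - ((-\<i>) *\<^sub>c H2) ** ((-\<i>) *\<^sub>c H1) = - commut H1 H2"
proof -
  have m1: "(-1::complex) *\<^sub>c X = - X" for X :: "'n cmat" by (simp add: csmult_def vec_eq_iff)
  have "((-\<i>) *\<^sub>c H1) ** ((-\<i>) *\<^sub>c H2) = - (H1 ** H2)" "((-\<i>) *\<^sub>c H2) ** ((-\<i>) *\<^sub>c H1) = - (H2 ** H1)"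
    by (simp_all add: cs_mm_left[symmetric] cs_mm_right cs_cs m1)
  then show ?thesis by (simp add: commut_def)
qed

lemma i_cs: "\<i> *\<^sub>c (H::'n::finite cmat) = - ((-\<i>) *\<^sub>c H)"
  by (simp add: csmult_def vec_eq_iff)



theorem lemma3:
  fixes H1 H2 :: "'n::finite cmat"
    and f1 f2 f1' f2' :: "real \<Rightarrow> real"
    and T h :: real
    and U :: "real \<Rightarrow> real \<Rightarrow> 'n cmat"
  assumes herm1: "hermitian H1" and herm2: "hermitian H2"
    and f1_deriv: "\<And>t. t \<in> {0..T} \<Longrightarrow> (f1 has_real_derivative f1' t) (at t within {0..T})"
    and f2_deriv: "\<And>t. t \<in> {0..T} \<Longrightarrow> (f2 has_real_derivative f2' t) (at t within {0..T})"
    and f1'_cont: "continuous_on {0..T} f1'"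
    and f2'_cont: "continuous_on {0..T} f2'"
    and U_init: "\<And>s. s \<in> {0..T} \<Longrightarrow> U s s = mat 1"
    and U_deriv: "\<And>t s. t \<in> {0..T} \<Longrightarrow> s \<in> {0..T} \<Longrightarrow>
       ((\<lambda>\<tau>. U \<tau> s) has_vector_derivative
          ((- \<i>) *\<^sub>c ((complex_of_real (f1 t) *\<^sub>c H1 + complex_of_real (f2 t) *\<^sub>c H2) ** U t s)))
         (at t within {0..T})"
    and h: "0 < h" "h \<le> T"
  shows
    "let E = (\<lambda>r. integral {0..r} (\<lambda>s. complex_of_real (f1 r * f2 s) *\<^sub>c
                     exp_ad ((\<i> * complex_of_real (s * f2 s)) *\<^sub>c H2) (commut H1 H2))
                 - (\<i> * complex_of_real (r * f1' r)) *\<^sub>c H1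
                 - (\<i> * complex_of_real (r * f2' r)) *\<^sub>c H2
                 + integral {0..r} (\<lambda>s. complex_of_real (s * f1 r * f2' s) *\<^sub>c
                     exp_ad ((\<i> * complex_of_real (s * f2 s)) *\<^sub>c H2) (commut H1 H2)))
     in mexp ((- \<i> * complex_of_real (f2 h * h)) *\<^sub>c H2) ** mexp ((- \<i> * complex_of_real (f1 h * h)) *\<^sub>c H1)
          - U h 0
        = integral {0..h} (\<lambda>s. U h s ** mexp ((- \<i> * complex_of_real (s * f2 s)) *\<^sub>c H2) ** E s
                                   ** mexp ((- \<i> * complex_of_real (s * f1 s)) *\<^sub>c H1))"
proof -
  define N1 where "N1 = (-\<i>) *\<^sub>c H1"
  define N2 where "N2 = (-\<i>) *\<^sub>c H2"
  define C where "C = commut H1 H2"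
  define a where "a s = s * f2 s" for s
  define b where "b s = s * f1 s" for s
  define a' where "a' s = f2 s + s * f2' s" for s
  define b' where "b' s = f1 s + s * f1' s" for s
  define M where "M t = f1 t *\<^sub>R N1 + f2 t *\<^sub>R N2" for t
  define E2 where "E2 x = mexp (x *\<^sub>R N2)" for x
  define E1 where "E1 x = mexp (x *\<^sub>R N1)" for x
  define V where "V s = E2 (a s) ** E1 (b s)" for s
  define X where "X s = E2 (-(a s)) ** C ** E2 (a s)" for s
  note bb = bb_mm[where 'n='n]
  have adjN1: "adj N1 = - N1" using adj_herm[OF herm1]
    by (simp add: N1_def adj_cs i_cs)
  have adjN2: "adj N2 = - N2" using adj_herm[OF herm2]
    by (simp add: N2_def adj_cs i_cs)
  have adjM: "adj (M t) = - M t" for t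
    by (simp add: M_def adj_add adj_scaleR adjN1 adjN2)
  have Ud: "((\<lambda>\<tau>. U \<tau> s) has_vector_derivative (M t ** U t s)) (at t within {0..T})"
    if "t \<in> {0..T}" "s \<in> {0..T}" for t s
  proof -
    have "(- \<i>) *\<^sub>c ((complex_of_real (f1 t) *\<^sub>c H1 + complex_of_real (f2 t) *\<^sub>c H2) ** U t s) = M t ** U t s"
      by (simp add: cs_real cs_mm_left cs_add cs_scaleR M_def N1_def N2_def)
    then show ?thesis using U_deriv[OF that] by simp
  qed
  have a_d: "(a has_real_derivative a' t) (at t within {0..T})" if "t \<in> {0..T}" for t
    using f2_deriv[OF that] unfolding a_def a'_def by (auto intro!: derivative_eq_intros)
  have b_d: "(b has_real_derivative b' t) (at t within {0..T})" if "t \<in> {0..T}" for t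
    using f1_deriv[OF that] unfolding b_def b'_def by (auto intro!: derivative_eq_intros)
  have cvx: "convex {0..T::real}" by simp
  have T0: "0 \<in> {0..T}" using h by simp
  have unit: "adj (U t 0) ** U t 0 = mat 1" if "t \<in> {0..T}" for t
  proof -
    define F where "F t = adj (U t 0) ** U t 0" for t
    have "(F has_vector_derivative 0) (at t within {0..T})" if "t \<in> {0..T}" for t
    proof -
      have "(F has_vector_derivative (adj (U t 0) ** (M t ** U t 0) + adj (M t ** U t 0) ** U t 0)) (at t within {0..T})"
        unfolding F_def
        by (intro bounded_bilinear.has_vector_derivative[OF bb]
             bounded_linear.has_vector_derivative[OF bl_adj] Ud that T0)
      moreover have "adj (U t 0) ** (M t ** U t 0) + adj (M t ** U t 0) ** U t 0 = 0"
        by (simp add: adj_mm adjM matrix_mul_assoc bounded_bilinear.minus_left[OF bb] bounded_bilinear.minus_right[OF bb])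
      ultimately show ?thesis by simp
    qed
    then have "F t = F 0" by (intro const_zero_deriv[OF cvx] that T0)
    then show ?thesis by (simp add: F_def U_init[OF T0] adj_one)
  qed
  have unit2: "U t 0 ** adj (U t 0) = mat 1" if "t \<in> {0..T}" for t
    using unit[OF that] matrix_left_right_inverse by blast
  have propag: "U t s = U t 0 ** adj (U s 0)" if "t \<in> {0..T}" "s \<in> {0..T}" for t s
  proof -
    define F where "F t = adj (U t 0) ** U t s" for t
    have "(F has_vector_derivative 0) (at t within {0..T})" if "t \<in> {0..T}" for t
    proof -
      have "(F has_vector_derivative (adj (U t 0) ** (M t ** U t s) + adj (M t ** U t 0) ** U t s)) (at t within {0..T})"
        unfolding F_def
        by (intro bounded_bilinear.has_vector_derivative[OF bb]
             bounded_linear.has_vector_derivative[OF bl_adj] Ud that T0 \<open>s \<in> {0..T}\<close>)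
      moreover have "adj (U t 0) ** (M t ** U t s) + adj (M t ** U t 0) ** U t s = 0"
        by (simp add: adj_mm adjM matrix_mul_assoc bounded_bilinear.minus_left[OF bb] bounded_bilinear.minus_right[OF bb])
      ultimately show ?thesis by simp
    qed
    then have "F t = F s" by (intro const_zero_deriv[OF cvx] that)
    then have "adj (U t 0) ** U t s = adj (U s 0)" by (simp add: F_def U_init[OF that(2)])
    then have "U t 0 ** (adj (U t 0) ** U t s) = U t 0 ** adj (U s 0)" by simp
    then show ?thesis by (simp add: matrix_mul_assoc unit2[OF that(1)])
  qed
  have E2d: "((\<lambda>s. E2 (a s)) has_vector_derivative (a' t *\<^sub>R (N2 ** E2 (a t)))) (at t within {0..T})"
    if "t \<in> {0..T}" for t
    unfolding E2_def by (rule mexp_vd_chain[OF a_d[OF that]])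
  have E2md: "((\<lambda>s. E2 (-(a s))) has_vector_derivative ((-(a' t)) *\<^sub>R (N2 ** E2 (-(a t))))) (at t within {0..T})"
    if "t \<in> {0..T}" for t
    unfolding E2_def by (rule mexp_vd_chain) (rule DERIV_minus[OF a_d[OF that]])
  have E1d: "((\<lambda>s. E1 (b s)) has_vector_derivative (b' t *\<^sub>R (N1 ** E1 (b t)))) (at t within {0..T})"
    if "t \<in> {0..T}" for t
    unfolding E1_def by (rule mexp_vd_chain[OF b_d[OF that]])
  define G where "G s = E2 (a s) ** (b' s *\<^sub>R (N1 ** E1 (b s))) + (a' s *\<^sub>R (N2 ** E2 (a s))) ** E1 (b s) - M s ** V s" for s
  have Zd: "((\<lambda>s. adj (U s 0) ** V s) has_vector_derivative (adj (U t 0) ** G t)) (at t within {0..T})"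
    if "t \<in> {0..T}" for t
  proof -
    have "((\<lambda>s. adj (U s 0) ** V s) has_vector_derivative
       (adj (U t 0) ** (E2 (a t) ** (b' t *\<^sub>R (N1 ** E1 (b t))) + (a' t *\<^sub>R (N2 ** E2 (a t))) ** E1 (b t))
        + adj (M t ** U t 0) ** V t)) (at t within {0..T})"
      unfolding V_def
      by (intro bounded_bilinear.has_vector_derivative[OF bb]
             bounded_linear.has_vector_derivative[OF bl_adj] Ud that T0 E2d E1d)
    moreover have "adj (U t 0) ** (E2 (a t) ** (b' t *\<^sub>R (N1 ** E1 (b t))) + (a' t *\<^sub>R (N2 ** E2 (a t))) ** E1 (b t))
        + adj (M t ** U t 0) ** V t = adj (U t 0) ** G t"
      by (simp add: G_def adj_mm adjM matrix_mul_assoc bounded_bilinear.minus_left[OF bb]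
          bounded_bilinear.minus_right[OF bb] bounded_bilinear.diff_right[OF bb])
    ultimately show ?thesis by simp
  qed
  have hT: "{0..h} \<subseteq> {0..T}" using h by auto
  have h0: "h \<in> {0..T}" using h by auto
  have V0: "V 0 = mat 1" by (simp add: V_def a_def b_def E1_def E2_def mexp_zero)
  have FTC: "((\<lambda>s. adj (U s 0) ** G s) has_integral (adj (U h 0) ** V h - adj (U 0 0) ** V 0)) {0..h}"
    using h by (intro fundamental_theorem_of_calculus has_vector_derivative_within_subset[OF Zd hT]) auto
  have I1: "((\<lambda>s. U h 0 ** (adj (U s 0) ** G s)) has_integral (V h - U h 0)) {0..h}"
  proof -
    from has_integral_linear[OF FTC bounded_bilinear.bounded_linear_right[OF bb, of "U h 0"]]
    have "((\<lambda>s. U h 0 ** (adj (U s 0) ** G s)) has_integral U h 0 ** (adj (U h 0) ** V h - adj (U 0 0) ** V 0)) {0..h}"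
      by (simp add: o_def)
    moreover have "U h 0 ** (adj (U h 0) ** V h - adj (U 0 0) ** V 0) = V h - U h 0"
      by (simp add: V0 U_init[OF T0] adj_one bounded_bilinear.diff_right[OF bb] matrix_mul_assoc unit2[OF h0])
    ultimately show ?thesis by simp
  qed
  have Xeq: "exp_ad ((\<i> * complex_of_real (\<sigma> * f2 \<sigma>)) *\<^sub>c H2) (commut H1 H2) = X \<sigma>" for \<sigma>
    unfolding exp_ad_def cs_i by (simp add: X_def E2_def a_def N2_def C_def)
  define Q where "Q s = E2 (-(a s)) ** N1 ** E2 (a s)" for s
  have Qd: "(Q has_vector_derivative ((-(a' t)) *\<^sub>R X t)) (at t within {0..T})" if "t \<in> {0..T}" for t
  proof -
    have "(Q has_vector_derivative ((E2 (-(a t)) ** N1) ** (a' t *\<^sub>R (N2 ** E2 (a t)))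
           + (E2 (-(a t)) ** 0 + ((-(a' t)) *\<^sub>R (N2 ** E2 (-(a t)))) ** N1) ** E2 (a t))) (at t within {0..T})"
      unfolding Q_def
      by (intro bounded_bilinear.has_vector_derivative[OF bb] has_vector_derivative_const E2d E2md that)
    moreover have "(E2 (-(a t)) ** N1) ** (a' t *\<^sub>R (N2 ** E2 (a t)))
           + (E2 (-(a t)) ** 0 + ((-(a' t)) *\<^sub>R (N2 ** E2 (-(a t)))) ** N1) ** E2 (a t) = (-(a' t)) *\<^sub>R X t"
      unfolding X_def
      by (rule q_alg) (simp only: E2_def mexp_comm, simp add: N1_def N2_def C_def N_comm)
    ultimately show ?thesis by simp
  qed
  have Xcont: "continuous_on {0..T} X"
  proof -
    have c1: "continuous_on {0..T} (\<lambda>s. E2 (a s))" by (rule continuous_on_vector_derivative) (rule E2d)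
    have c2: "continuous_on {0..T} (\<lambda>s. E2 (-(a s)))" by (rule continuous_on_vector_derivative) (rule E2md)
    show ?thesis unfolding X_def
      by (intro bounded_bilinear.continuous_on[OF bb] c1 c2 continuous_on_const)
  qed
  have f2cont: "continuous_on {0..T} f2"
    by (rule continuous_on_vector_derivative) (use f2_deriv in \<open>auto simp: has_real_derivative_iff_has_vector_derivative\<close>)
  have J: "integral {0..r} (\<lambda>s. complex_of_real (f1 r * f2 s) *\<^sub>c
                     exp_ad ((\<i> * complex_of_real (s * f2 s)) *\<^sub>c H2) (commut H1 H2))
           + integral {0..r} (\<lambda>s. complex_of_real (s * f1 r * f2' s) *\<^sub>c
                     exp_ad ((\<i> * complex_of_real (s * f2 s)) *\<^sub>c H2) (commut H1 H2))
         = f1 r *\<^sub>R (N1 - Q r)" if r: "r \<in> {0..T}" for r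
  proof -
    have rT: "{0..r} \<subseteq> {0..T}" using r by auto
    have FT: "((\<lambda>\<sigma>. (-(a' \<sigma>)) *\<^sub>R X \<sigma>) has_integral (Q r - Q 0)) {0..r}"
      using r by (intro fundamental_theorem_of_calculus has_vector_derivative_within_subset[OF Qd rT]) auto
    have Q0: "Q 0 = N1" by (simp add: Q_def a_def E2_def mexp_zero)
    from has_integral_cmul[OF FT, of "-(f1 r)"]
    have FT2: "((\<lambda>\<sigma>. (f1 r * f2 \<sigma>) *\<^sub>R X \<sigma> + (\<sigma> * f1 r * f2' \<sigma>) *\<^sub>R X \<sigma>) has_integral f1 r *\<^sub>R (N1 - Q r)) {0..r}"
      by (simp add: Q0 a'_def algebra_simps)
    have i1: "(\<lambda>\<sigma>. (f1 r * f2 \<sigma>) *\<^sub>R X \<sigma>) integrable_on {0..r}"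
      by (intro integrable_continuous_interval continuous_on_subset[OF _ rT] continuous_intros Xcont f2cont)
    have i2: "(\<lambda>\<sigma>. (\<sigma> * f1 r * f2' \<sigma>) *\<^sub>R X \<sigma>) integrable_on {0..r}"
      by (intro integrable_continuous_interval continuous_on_subset[OF _ rT] continuous_intros Xcont f2'_cont)
    have "integral {0..r} (\<lambda>\<sigma>. (f1 r * f2 \<sigma>) *\<^sub>R X \<sigma>) + integral {0..r} (\<lambda>\<sigma>. (\<sigma> * f1 r * f2' \<sigma>) *\<^sub>R X \<sigma>)
        = f1 r *\<^sub>R (N1 - Q r)"
      using integral_add[OF i1 i2] integral_unique[OF FT2] by simp
    then show ?thesis unfolding Xeq cs_real .
  qed
  define E where "E = (\<lambda>r. integral {0..r} (\<lambda>s. complex_of_real (f1 r * f2 s) *\<^sub>c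
                     exp_ad ((\<i> * complex_of_real (s * f2 s)) *\<^sub>c H2) (commut H1 H2))
                 - (\<i> * complex_of_real (r * f1' r)) *\<^sub>c H1
                 - (\<i> * complex_of_real (r * f2' r)) *\<^sub>c H2
                 + integral {0..r} (\<lambda>s. complex_of_real (s * f1 r * f2' s) *\<^sub>c
                     exp_ad ((\<i> * complex_of_real (s * f2 s)) *\<^sub>c H2) (commut H1 H2)))"
  have Eeq: "E r = f1 r *\<^sub>R (N1 - Q r) + (r * f1' r) *\<^sub>R N1 + (r * f2' r) *\<^sub>R N2"
    if r: "r \<in> {0..T}" for r
  proof -
    have "E r = (integral {0..r} (\<lambda>s. complex_of_real (f1 r * f2 s) *\<^sub>c
                     exp_ad ((\<i> * complex_of_real (s * f2 s)) *\<^sub>c H2) (commut H1 H2))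
           + integral {0..r} (\<lambda>s. complex_of_real (s * f1 r * f2' s) *\<^sub>c
                     exp_ad ((\<i> * complex_of_real (s * f2 s)) *\<^sub>c H2) (commut H1 H2)))
                 - (\<i> * complex_of_real (r * f1' r)) *\<^sub>c H1
                 - (\<i> * complex_of_real (r * f2' r)) *\<^sub>c H2"
      unfolding E_def by (simp only: diff_conv_add_uminus add_ac)
    also have "\<dots> = f1 r *\<^sub>R (N1 - Q r) + (r * f1' r) *\<^sub>R N1 + (r * f2' r) *\<^sub>R N2"
      unfolding J[OF r] unfolding cs_i N1_def N2_def by simp
    finally show ?thesis .
  qed
  have integrand: "U h s ** mexp ((- \<i> * complex_of_real (s * f2 s)) *\<^sub>c H2) ** E s
                   ** mexp ((- \<i> * complex_of_real (s * f1 s)) *\<^sub>c H1) = U h 0 ** (adj (U s 0) ** G s)"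
    if s: "s \<in> {0..h}" for s
  proof -
    have sT: "s \<in> {0..T}" using s hT by auto
    have m2: "mexp ((- \<i> * complex_of_real (s * f2 s)) *\<^sub>c H2) = E2 (a s)"
      unfolding cs_mult_real by (simp add: E2_def a_def N2_def)
    have m1: "mexp ((- \<i> * complex_of_real (s * f1 s)) *\<^sub>c H1) = E1 (b s)"
      unfolding cs_mult_real by (simp add: E1_def b_def N1_def)
    have G: "G s = E2 (a s) ** E s ** E1 (b s)"
      unfolding Eeq[OF sT] Q_def G_def M_def V_def a'_def b'_def
      by (rule key_alg) (simp only: E2_def mexp_inv, simp only: E2_def mexp_comm)
    show ?thesis unfolding m1 m2 G propag[OF h0 sT] by (simp add: matrix_mul_assoc)
  qed
  have I2: "((\<lambda>s. U h s ** mexp ((- \<i> * complex_of_real (s * f2 s)) *\<^sub>c H2) ** E s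
                   ** mexp ((- \<i> * complex_of_real (s * f1 s)) *\<^sub>c H1)) has_integral (V h - U h 0)) {0..h}"
    using I1 by (subst has_integral_cong[OF integrand]) auto
  have Vh: "mexp ((- \<i> * complex_of_real (f2 h * h)) *\<^sub>c H2) ** mexp ((- \<i> * complex_of_real (f1 h * h)) *\<^sub>c H1) = V h"
    unfolding cs_mult_real by (simp add: V_def E1_def E2_def a_def b_def N1_def N2_def mult.commute)
  have final: "mexp ((- \<i> * complex_of_real (f2 h * h)) *\<^sub>c H2) ** mexp ((- \<i> * complex_of_real (f1 h * h)) *\<^sub>c H1)
          - U h 0
        = integral {0..h} (\<lambda>s. U h s ** mexp ((- \<i> * complex_of_real (s * f2 s)) *\<^sub>c H2) ** E s
                                   ** mexp ((- \<i> * complex_of_real (s * f1 s)) *\<^sub>c H1))"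
    unfolding Vh using integral_unique[OF I2] by simp
  show ?thesis unfolding Let_def using final by (simp only: E_def)
qed

end
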